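(* Let $\mathcal M=(M,<,+,0,\ldots)$ be a definably complete locally o-minimal expansion of an ordered group. Let $(G,d_G)$ be a definably compact definable metric group and $(X,d_X)$ a definable metric space, with $G$ acting on $X$ by a definable continuous left action. Then for every $G$-invariant definable closed subset $A$ of $X$ there is a definable continuous $G$-invariant function $f:X\to M$ with $f^{-1}(0)=A$.
   Context: "Definable" means definable in $\mathcal M$ with parameters. $\mathcal M$ is an expansion of an ordered group with dense order without endpoints; locally o-minimal: for every definable $Y\subseteq M$ and $a\in M$ there is an open interval $I\ni a$ with $Y\cap I$ a finite union of points and open intervals; definably complete: every definable subset of $M$ has sup and inf in $M\cup\{\pm\infty\}$. A definable metric space $(X,d_X)$ is a definable set with a definable $d_X:X\times X\to\{a\ge0\}$ satisfying $d_X(x,y)=0\iff x=y$, symmetry and triangle inequality, topologized by the open balls. A definable metric group is a definable metric space whose underlying set is a definable group with multiplication and inversion continuous. It is definably compact if every definable filtered family (any two members contain a common member) of nonempty closed subsets has nonempty intersection. $f$ is $G$-invariant if $f(gx)=f(x)$ for all $g\in G$, $x\in X$. *)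

theory Defs
  imports Main
begin

text \<open>
  Definable sets of an expansion of (M,<,+,0) with parameters are encoded, following
  van den Dries, as a "structure on M": a family D n of subsets of M^n, where
  M^n is represented by the lists of length n over the carrier type 'm.
\<close>

definition is_structure :: "(nat \<Rightarrow> 'm list set set) \<Rightarrow> bool" where
  "is_structure D \<longleftrightarrow>
     (\<forall>n. \<forall>A\<in>D n. A \<subseteq> {xs. length xs = n}) \<and>
     (\<forall>n. {xs. length xs = n} \<in> D n) \<and>
     (\<forall>n. \<forall>A\<in>D n. \<forall>B\<in>D n. A \<union> B \<in> D n) \<and>
     (\<forall>n. \<forall>A\<in>D n. {xs. length xs = n} - A \<in> D n) \<and>
     (\<forall>n. \<forall>A\<in>D n. {xs @ [y] | xs y. xs \<in> A} \<in> D (Suc n)) \<and>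
     (\<forall>n. \<forall>A\<in>D n. {y # xs | y xs. xs \<in> A} \<in> D (Suc n)) \<and>
     (\<forall>n i j. i < n \<longrightarrow> j < n \<longrightarrow> {xs. length xs = n \<and> xs ! i = xs ! j} \<in> D n) \<and>
     (\<forall>n. \<forall>A\<in>D (Suc n). butlast ` A \<in> D n)"

text \<open>The structure expands (M,<,+) and allows parameters (all singletons definable).\<close>
definition expands_ordered_group :: "(nat \<Rightarrow> ('m::{linorder,group_add}) list set set) \<Rightarrow> bool" where
  "expands_ordered_group D \<longleftrightarrow>
     {[x, y] | x y. x < y} \<in> D 2 \<and>
     {[x, y, z] | x y z. z = x + y} \<in> D 3 \<and>
     (\<forall>a. {[a]} \<in> D 1)"

definition definable_subset_M :: "(nat \<Rightarrow> 'm list set set) \<Rightarrow> 'm set \<Rightarrow> bool" where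
  "definable_subset_M D Y \<longleftrightarrow> (\<lambda>y. [y]) ` Y \<in> D 1"

definition locally_o_minimal :: "(nat \<Rightarrow> ('m::linorder) list set set) \<Rightarrow> bool" where
  "locally_o_minimal D \<longleftrightarrow>
     (\<forall>Y. definable_subset_M D Y \<longrightarrow>
        (\<forall>a. \<exists>b c. b < a \<and> a < c \<and>
           (\<exists>P I. finite P \<and> finite I \<and>
              Y \<inter> {b<..<c} = P \<union> (\<Union>(l, u)\<in>I. {l<..<u}))))"

definition definably_complete :: "(nat \<Rightarrow> ('m::linorder) list set set) \<Rightarrow> bool" where
  "definably_complete D \<longleftrightarrow>
     (\<forall>Y. definable_subset_M D Y \<longrightarrow> Y \<noteq> {} \<longrightarrow>
        (bdd_above Y \<longrightarrow> (\<exists>s. (\<forall>y\<in>Y. y \<le> s) \<and> (\<forall>s'. (\<forall>y\<in>Y. y \<le> s') \<longrightarrow> s \<le> s'))) \<and>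
        (bdd_below Y \<longrightarrow> (\<exists>s. (\<forall>y\<in>Y. s \<le> y) \<and> (\<forall>s'. (\<forall>y\<in>Y. s' \<le> y) \<longrightarrow> s' \<le> s))))"

definition def_metric_space ::
  "(nat \<Rightarrow> ('m::{linorder,group_add}) list set set) \<Rightarrow> nat \<Rightarrow> 'm list set \<Rightarrow> ('m list \<Rightarrow> 'm list \<Rightarrow> 'm) \<Rightarrow> bool" where
  "def_metric_space D n X d \<longleftrightarrow>
     X \<in> D n \<and>
     {xs @ ys @ [d xs ys] | xs ys. xs \<in> X \<and> ys \<in> X} \<in> D (2 * n + 1) \<and>
     (\<forall>x\<in>X. \<forall>y\<in>X. 0 \<le> d x y \<and> (d x y = 0 \<longleftrightarrow> x = y) \<and> d x y = d y x) \<and>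
     (\<forall>x\<in>X. \<forall>y\<in>X. \<forall>z\<in>X. d x z \<le> d x y + d y z)"

definition mcont ::
  "'a set \<Rightarrow> ('a \<Rightarrow> 'a \<Rightarrow> 'm::{linorder,zero}) \<Rightarrow> ('b \<Rightarrow> 'b \<Rightarrow> 'm) \<Rightarrow> ('a \<Rightarrow> 'b) \<Rightarrow> bool" where
  "mcont X dX dY f \<longleftrightarrow>
     (\<forall>x\<in>X. \<forall>e>0. \<exists>\<delta>>0. \<forall>y\<in>X. dX x y < \<delta> \<longrightarrow> dY (f x) (f y) < e)"

definition mcont2 ::
  "'a set \<Rightarrow> ('a \<Rightarrow> 'a \<Rightarrow> 'm::{linorder,zero}) \<Rightarrow> 'b set \<Rightarrow> ('b \<Rightarrow> 'b \<Rightarrow> 'm)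
     \<Rightarrow> ('c \<Rightarrow> 'c \<Rightarrow> 'm) \<Rightarrow> ('a \<Rightarrow> 'b \<Rightarrow> 'c) \<Rightarrow> bool" where
  "mcont2 X dX Y dY dZ f \<longleftrightarrow>
     (\<forall>x\<in>X. \<forall>y\<in>Y. \<forall>e>0. \<exists>\<delta>>0. \<forall>x'\<in>X. \<forall>y'\<in>Y.
        dX x x' < \<delta> \<longrightarrow> dY y y' < \<delta> \<longrightarrow> dZ (f x y) (f x' y') < e)"

definition cont_to_M :: "'a set \<Rightarrow> ('a \<Rightarrow> 'a \<Rightarrow> 'm::{linorder,zero}) \<Rightarrow> ('a \<Rightarrow> 'm) \<Rightarrow> bool" where
  "cont_to_M X dX f \<longleftrightarrow>
     (\<forall>x\<in>X. \<forall>a b. a < f x \<and> f x < b \<longrightarrow>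
        (\<exists>\<delta>>0. \<forall>y\<in>X. dX x y < \<delta> \<longrightarrow> a < f y \<and> f y < b))"

definition closed_in_metric :: "'a set \<Rightarrow> ('a \<Rightarrow> 'a \<Rightarrow> 'm::{linorder,zero}) \<Rightarrow> 'a set \<Rightarrow> bool" where
  "closed_in_metric X d A \<longleftrightarrow>
     A \<subseteq> X \<and> (\<forall>x\<in>X - A. \<exists>r>0. \<forall>y\<in>X. d x y < r \<longrightarrow> y \<notin> A)"

definition def_metric_group ::
  "(nat \<Rightarrow> ('m::{linorder,group_add}) list set set) \<Rightarrow> nat \<Rightarrow> 'm list set \<Rightarrow> ('m list \<Rightarrow> 'm list \<Rightarrow> 'm)
     \<Rightarrow> ('m list \<Rightarrow> 'm list \<Rightarrow> 'm list) \<Rightarrow> ('m list \<Rightarrow> 'm list) \<Rightarrow> 'm list \<Rightarrow> bool" where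
  "def_metric_group D m G dG mul ginv e \<longleftrightarrow>
     def_metric_space D m G dG \<and>
     e \<in> G \<and> (\<forall>g\<in>G. \<forall>h\<in>G. mul g h \<in> G) \<and> (\<forall>g\<in>G. ginv g \<in> G) \<and>
     (\<forall>g\<in>G. \<forall>h\<in>G. \<forall>k\<in>G. mul (mul g h) k = mul g (mul h k)) \<and>
     (\<forall>g\<in>G. mul e g = g \<and> mul g e = g) \<and>
     (\<forall>g\<in>G. mul (ginv g) g = e \<and> mul g (ginv g) = e) \<and>
     {g @ h @ mul g h | g h. g \<in> G \<and> h \<in> G} \<in> D (3 * m) \<and>
     {g @ ginv g | g. g \<in> G} \<in> D (2 * m) \<and>
     mcont2 G dG G dG dG mul \<and> mcont G dG dG ginv"

text \<open>A definable family of subsets of G \<subseteq> M^m is given by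
  some S \<in> D (k + m); its members are the nonempty fibres {x. t @ x \<in> S}.\<close>
definition definably_compact ::
  "(nat \<Rightarrow> 'm list set set) \<Rightarrow> nat \<Rightarrow> 'm list set \<Rightarrow> ('m list \<Rightarrow> 'm list \<Rightarrow> 'm::{linorder,zero}) \<Rightarrow> bool" where
  "definably_compact D m G dG \<longleftrightarrow>
     (\<forall>k S. S \<in> D (k + m) \<longrightarrow>
        (let Fam = (\<lambda>t. {x. t @ x \<in> S}) ` {t. length t = k \<and> (\<exists>x. t @ x \<in> S)} in
          (\<forall>F\<in>Fam. F \<noteq> {} \<and> closed_in_metric G dG F) \<longrightarrow>
          (\<forall>F1\<in>Fam. \<forall>F2\<in>Fam. \<exists>F3\<in>Fam. F3 \<subseteq> F1 \<inter> F2) \<longrightarrow>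
          (\<exists>x\<in>G. \<forall>F\<in>Fam. x \<in> F)))"

definition def_action ::
  "(nat \<Rightarrow> ('m::{linorder,group_add}) list set set) \<Rightarrow> nat \<Rightarrow> 'm list set \<Rightarrow> ('m list \<Rightarrow> 'm list \<Rightarrow> 'm)
     \<Rightarrow> ('m list \<Rightarrow> 'm list \<Rightarrow> 'm list) \<Rightarrow> 'm list
     \<Rightarrow> nat \<Rightarrow> 'm list set \<Rightarrow> ('m list \<Rightarrow> 'm list \<Rightarrow> 'm) \<Rightarrow> ('m list \<Rightarrow> 'm list \<Rightarrow> 'm list) \<Rightarrow> bool" where
  "def_action D m G dG mul e n X dX act \<longleftrightarrow>
     (\<forall>g\<in>G. \<forall>x\<in>X. act g x \<in> X) \<and>
     (\<forall>x\<in>X. act e x = x) \<and>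
     (\<forall>g\<in>G. \<forall>h\<in>G. \<forall>x\<in>X. act (mul g h) x = act g (act h x)) \<and>
     {g @ x @ act g x | g x. g \<in> G \<and> x \<in> X} \<in> D (m + n + n) \<and>
     mcont2 G dG X dX dX act"

definition def_function_to_M ::
  "(nat \<Rightarrow> 'm list set set) \<Rightarrow> nat \<Rightarrow> 'm list set \<Rightarrow> ('m list \<Rightarrow> 'm) \<Rightarrow> bool" where
  "def_function_to_M D n X f \<longleftrightarrow> {xs @ [f xs] | xs. xs \<in> X} \<in> D (Suc n)"

end

theory Submission
  imports Defs
begin


definition dset :: "(nat \<Rightarrow> 'm list set set) \<Rightarrow> nat \<Rightarrow> ('m list \<Rightarrow> bool) \<Rightarrow> bool" where
  "dset D n P \<longleftrightarrow> {xs. length xs = n \<and> P xs} \<in> D n"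

lemma dset_cong: "(\<And>xs. length xs = n \<Longrightarrow> P xs = Q xs) \<Longrightarrow> dset D n P = dset D n Q"
proof -
  assume h: "\<And>xs. length xs = n \<Longrightarrow> P xs = Q xs"
  have "{xs. length xs = n \<and> P xs} = {xs. length xs = n \<and> Q xs}" using h by blast
  thus ?thesis unfolding dset_def by simp
qed

lemma dset_mono_cong: assumes "dset D n P" "\<And>xs. length xs = n \<Longrightarrow> P xs = Q xs" shows "dset D n Q"
  using assms(1) dset_cong[of n P Q D, OF assms(2)] by simp


lemma structD:
  assumes "is_structure D"
  shows "\<And>n A. A \<in> D n \<Longrightarrow> A \<subseteq> {xs. length xs = n}"
    and "\<And>n. {xs. length xs = n} \<in> D n"
    and "\<And>n A B. A \<in> D n \<Longrightarrow> B \<in> D n \<Longrightarrow> A \<union> B \<in> D n"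
    and "\<And>n A. A \<in> D n \<Longrightarrow> {xs. length xs = n} - A \<in> D n"
    and "\<And>n A. A \<in> D n \<Longrightarrow> {xs @ [y] | xs y. xs \<in> A} \<in> D (Suc n)"
    and "\<And>n A. A \<in> D n \<Longrightarrow> {y # xs | y xs. xs \<in> A} \<in> D (Suc n)"
    and "\<And>n i j. i < n \<Longrightarrow> j < n \<Longrightarrow> {xs. length xs = n \<and> xs ! i = xs ! j} \<in> D n"
    and "\<And>n A. A \<in> D (Suc n) \<Longrightarrow> butlast ` A \<in> D n"
  using assms unfolding is_structure_def by (elim conjE; simp)+

lemma dset_mem: assumes "is_structure D" "S \<in> D n" shows "dset D n (\<lambda>xs. xs \<in> S)"
proof -
  have "S \<subseteq> {xs. length xs = n}" using structD(1)[OF assms] by blast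
  hence "{xs. length xs = n \<and> xs \<in> S} = S" by blast
  thus ?thesis using assms unfolding dset_def by simp
qed

lemma dset_set: assumes "dset D n P" "S = {xs. length xs = n \<and> P xs}" shows "S \<in> D n"
  using assms unfolding dset_def by simp

lemma dset_true: assumes "is_structure D" shows "dset D n (\<lambda>_. True)"
proof -
  have "{xs. length xs = n} \<in> D n" using structD(2)[OF assms] by blast
  thus ?thesis unfolding dset_def by simp
qed

lemma dset_not: assumes "is_structure D" "dset D n P" shows "dset D n (\<lambda>xs. \<not> P xs)"
proof -
  have "{xs. length xs = n} - {xs. length xs = n \<and> P xs} \<in> D n"
    using structD(4)[OF assms(1) assms(2)[unfolded dset_def]] by blast
  moreover have "{xs. length xs = n} - {xs. length xs = n \<and> P xs} = {xs. length xs = n \<and> \<not> P xs}" by blast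
  ultimately show ?thesis unfolding dset_def by simp
qed

lemma dset_or: assumes "is_structure D" "dset D n P" "dset D n Q" shows "dset D n (\<lambda>xs. P xs \<or> Q xs)"
proof -
  have "{xs. length xs = n \<and> P xs} \<union> {xs. length xs = n \<and> Q xs} \<in> D n"
    using structD(3)[OF assms(1) assms(2)[unfolded dset_def] assms(3)[unfolded dset_def]] by blast
  moreover have "{xs. length xs = n \<and> P xs} \<union> {xs. length xs = n \<and> Q xs} = {xs. length xs = n \<and> (P xs \<or> Q xs)}" by blast
  ultimately show ?thesis unfolding dset_def by simp
qed

lemma dset_and: assumes "is_structure D" "dset D n P" "dset D n Q" shows "dset D n (\<lambda>xs. P xs \<and> Q xs)"
proof -
  have "dset D n (\<lambda>xs. \<not> (\<not> P xs \<or> \<not> Q xs))"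
    by (intro dset_not dset_or assms)
  thus ?thesis by simp
qed

lemma dset_snoc: assumes "is_structure D" "dset D n P" shows "dset D (Suc n) (\<lambda>zs. P (butlast zs))"
proof -
  have "{xs @ [y] | xs y. xs \<in> {xs. length xs = n \<and> P xs}} \<in> D (Suc n)"
    using structD(5)[OF assms(1) assms(2)[unfolded dset_def]] by blast
  moreover have "{xs @ [y] | xs y. xs \<in> {xs. length xs = n \<and> P xs}} = {zs. length zs = Suc n \<and> P (butlast zs)}"
  proof (rule set_eqI, rule iffI)
    fix zs assume "zs \<in> {zs. length zs = Suc n \<and> P (butlast zs)}"
    hence "zs \<noteq> []" "length zs = Suc n" "P (butlast zs)" by auto
    hence "zs = butlast zs @ [last zs]" "length (butlast zs) = n" by auto
    thus "zs \<in> {xs @ [y] | xs y. xs \<in> {xs. length xs = n \<and> P xs}}" using \<open>P (butlast zs)\<close> by blast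
  qed auto
  ultimately show ?thesis unfolding dset_def by simp
qed

lemma dset_cons: assumes "is_structure D" "dset D n P" shows "dset D (Suc n) (\<lambda>zs. P (tl zs))"
proof -
  have "{y # xs | y xs. xs \<in> {xs. length xs = n \<and> P xs}} \<in> D (Suc n)"
    using structD(6)[OF assms(1) assms(2)[unfolded dset_def]] by blast
  moreover have "{y # xs | y xs. xs \<in> {xs. length xs = n \<and> P xs}} = {zs. length zs = Suc n \<and> P (tl zs)}"
  proof (rule set_eqI, rule iffI)
    fix zs assume "zs \<in> {zs. length zs = Suc n \<and> P (tl zs)}"
    hence "zs \<noteq> []" "length zs = Suc n" "P (tl zs)" by auto
    hence "zs = hd zs # tl zs" "length (tl zs) = n" by auto
    thus "zs \<in> {y # xs | y xs. xs \<in> {xs. length xs = n \<and> P xs}}" using \<open>P (tl zs)\<close> by blast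
  qed auto
  ultimately show ?thesis unfolding dset_def by simp
qed

lemma dset_proj: assumes "is_structure D" "dset D (Suc n) P" shows "dset D n (\<lambda>xs. \<exists>y. P (xs @ [y]))"
proof -
  have "butlast ` {zs. length zs = Suc n \<and> P zs} \<in> D n"
    using structD(8)[OF assms(1) assms(2)[unfolded dset_def]] by blast
  moreover have "butlast ` {zs. length zs = Suc n \<and> P zs} = {xs. length xs = n \<and> (\<exists>y. P (xs @ [y]))}"
  proof (rule set_eqI, rule iffI)
    fix xs assume "xs \<in> butlast ` {zs. length zs = Suc n \<and> P zs}"
    then obtain zs where z: "length zs = Suc n" "P zs" "xs = butlast zs" by blast
    hence "zs = xs @ [last zs]" by (metis append_butlast_last_id list.size(3) nat.distinct(1))
    thus "xs \<in> {xs. length xs = n \<and> (\<exists>y. P (xs @ [y]))}" using z by (metis (mono_tags, lifting) diff_Suc_1 length_butlast mem_Collect_eq)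
  next
    fix xs assume "xs \<in> {xs. length xs = n \<and> (\<exists>y. P (xs @ [y]))}"
    then obtain y where "length xs = n" "P (xs @ [y])" by blast
    thus "xs \<in> butlast ` {zs. length zs = Suc n \<and> P zs}"
      by (metis (mono_tags, lifting) butlast_snoc image_eqI length_append_singleton mem_Collect_eq)
  qed
  ultimately show ?thesis unfolding dset_def by simp
qed

lemma dset_diag: assumes "is_structure D" "i < n" "j < n" shows "dset D n (\<lambda>xs. xs ! i = xs ! j)"
proof -
  have "{xs. length xs = n \<and> xs ! i = xs ! j} \<in> D n"
    using structD(7)[OF assms] by blast
  thus ?thesis unfolding dset_def by simp
qed

lemma dset_drop: assumes "is_structure D" "dset D k P" shows "dset D (j + k) (\<lambda>zs. P (drop j zs))"
proof (induction j)
  case 0 thus ?case using assms by simp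
next
  case (Suc j)
  have "dset D (Suc (j + k)) (\<lambda>zs. P (drop j (tl zs)))" using dset_cons[OF assms(1) Suc] by simp
  thus ?case by (simp add: drop_Suc)
qed

lemma dset_all: fixes k :: nat assumes "is_structure D" "\<And>i. i < k \<Longrightarrow> dset D n (Q i)" shows "dset D n (\<lambda>xs. \<forall>i<k. Q i xs)"
  using assms(2)
proof (induction k rule: nat.induct)
  case zero thus ?case using dset_true[OF assms(1)] by simp
next
  case (Suc k)
  have "dset D n (\<lambda>xs. (\<forall>i<k. Q i xs) \<and> Q k xs)" using Suc dset_and[OF assms(1)] by simp
  thus ?case by (rule dset_mono_cong) (auto simp: less_Suc_eq)
qed

lemma length_Suc_snoc: "length ys = Suc k \<longleftrightarrow> (\<exists>ys' y. ys = ys' @ [y] \<and> length ys' = k)"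
  by (cases ys rule: rev_cases) auto

lemma dset_exs: assumes "is_structure D" "dset D (n + k) P" shows "dset D n (\<lambda>xs. \<exists>ys. length ys = k \<and> P (xs @ ys))"
  using assms(2)
proof (induction k arbitrary: P)
  case 0 hence "dset D n P" by simp
  thus ?case by (rule dset_mono_cong) auto
next
  case (Suc k)
  have "dset D (n + k) (\<lambda>zs. \<exists>y. P (zs @ [y]))" using dset_proj[OF assms(1)] Suc.prems by simp
  hence "dset D n (\<lambda>xs. \<exists>ys. length ys = k \<and> (\<exists>y. P ((xs @ ys) @ [y])))" using Suc.IH by blast
  thus ?case by (rule dset_mono_cong) (auto simp: length_Suc_snoc)
qed

lemma dset_pull: assumes S: "is_structure D" and sig: "\<And>i. i < k \<Longrightarrow> \<sigma> i < n" and P: "dset D k P"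
  shows "dset D n (\<lambda>xs. P (map (\<lambda>i. xs ! \<sigma> i) [0..<k]))"
proof -
  have "dset D (n + k) (\<lambda>zs. P (drop n zs) \<and> (\<forall>i<k. zs ! (n + i) = zs ! \<sigma> i))"
    apply (rule dset_and[OF S dset_drop[OF S P]])
    apply (rule dset_all[OF S])
    apply (rule dset_diag[OF S])
    using sig by (auto simp: less_imp_le_nat trans_less_add1)
  hence "dset D n (\<lambda>xs. \<exists>ys. length ys = k \<and> P (drop n (xs @ ys)) \<and> (\<forall>i<k. (xs @ ys) ! (n + i) = (xs @ ys) ! \<sigma> i))"
    using dset_exs[OF S] by blast
  thus ?thesis
  proof (rule dset_mono_cong)
    fix xs :: "'a list" assume len: "length xs = n"
    show "(\<exists>ys. length ys = k \<and> P (drop n (xs @ ys)) \<and> (\<forall>i<k. (xs @ ys) ! (n + i) = (xs @ ys) ! \<sigma> i))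
       = P (map (\<lambda>i. xs ! \<sigma> i) [0..<k])" (is "?L = ?R")
    proof
      assume ?L
      then obtain ys where y: "length ys = k" "P ys" "\<forall>i<k. ys ! i = xs ! \<sigma> i"
        using len sig by (auto simp: nth_append)
      have "ys = map (\<lambda>i. xs ! \<sigma> i) [0..<k]" by (rule nth_equalityI) (use y in auto)
      thus ?R using y by simp
    next
      assume ?R
      thus ?L using len sig by (intro exI[of _ "map (\<lambda>i. xs ! \<sigma> i) [0..<k]"]) (auto simp: nth_append)
    qed
  qed
qed

datatype 'a fm = Atom "'a list set" "nat list" | Neg "'a fm" | Conj "'a fm" "'a fm" | Exi "'a fm"

fun ev :: "'a fm \<Rightarrow> 'a list \<Rightarrow> bool" where
  "ev (Atom S vs) env = (map (\<lambda>i. env ! i) vs \<in> S)"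
| "ev (Neg p) env = (\<not> ev p env)"
| "ev (Conj p q) env = (ev p env \<and> ev q env)"
| "ev (Exi p) env = (\<exists>y. ev p (env @ [y]))"

fun wf :: "(nat \<Rightarrow> 'a list set set) \<Rightarrow> nat \<Rightarrow> 'a fm \<Rightarrow> bool" where
  "wf D n (Atom S vs) = (S \<in> D (length vs) \<and> (\<forall>v\<in>set vs. v < n))"
| "wf D n (Neg p) = wf D n p"
| "wf D n (Conj p q) = (wf D n p \<and> wf D n q)"
| "wf D n (Exi p) = wf D (Suc n) p"

lemma dset_fm: assumes S: "is_structure D" shows "wf D n p \<Longrightarrow> dset D n (ev p)"
proof (induction p arbitrary: n)
  case (Atom T vs)
  have "dset D (length vs) (\<lambda>ys. ys \<in> T)" using dset_mem[OF S] Atom by simp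
  hence "dset D n (\<lambda>xs. map (\<lambda>i. xs ! (vs ! i)) [0..<length vs] \<in> T)"
    using dset_pull[OF S, of "length vs" "\<lambda>i. vs ! i" n] Atom by simp
  moreover have eq: "\<And>xs. map (\<lambda>i. xs ! (vs ! i)) [0..<length vs] = map (\<lambda>i. xs ! i) vs"
    by (rule nth_equalityI) auto
  ultimately show ?case unfolding eq by simp
next
  case (Neg p) thus ?case using dset_not[OF S] by (simp add: comp_def)
next
  case (Conj p q) thus ?case using dset_and[OF S] by simp
next
  case (Exi p) thus ?case using dset_proj[OF S] by simp
qed

definition Disj where "Disj p q = Neg (Conj (Neg p) (Neg q))"
definition Impl where "Impl p q = Neg (Conj p (Neg q))"
definition Exs :: "nat \<Rightarrow> 'a fm \<Rightarrow> 'a fm" where "Exs k p = (Exi ^^ k) p"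

lemma ev_Disj[simp]: "ev (Disj p q) env = (ev p env \<or> ev q env)" by (simp add: Disj_def)
lemma ev_Impl[simp]: "ev (Impl p q) env = (ev p env \<longrightarrow> ev q env)" by (simp add: Impl_def)
lemma wf_Disj[simp]: "wf D n (Disj p q) = (wf D n p \<and> wf D n q)" by (simp add: Disj_def)
lemma wf_Impl[simp]: "wf D n (Impl p q) = (wf D n p \<and> wf D n q)" by (simp add: Impl_def)

lemma ev_Exs[simp]: "ev (Exs k p) env = (\<exists>ys. length ys = k \<and> ev p (env @ ys))"
  unfolding Exs_def
proof (induction k arbitrary: env)
  case 0 thus ?case by simp
next
  case (Suc k)
  show ?case
    apply (simp add: Suc.IH)
    apply (rule iffI)
     apply (metis append.assoc append_Cons append_Nil length_Cons)
    by (metis Suc_length_conv append.assoc append_Cons append_Nil)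
qed

lemma wf_Exs[simp]: "wf D n (Exs k p) = wf D (n + k) p"
  unfolding Exs_def by (induction k arbitrary: n) auto

lemma map_nth_upt: "i + k \<le> length env \<Longrightarrow> map (\<lambda>j. env ! j) [i..<i + k] = take k (drop i env)"
  by (rule nth_equalityI) auto

lemma point_set: assumes S: "is_structure D" and C: "\<forall>a. {[a]} \<in> D 1" shows "{p} \<in> D (length p)"
proof (induction p rule: rev_induct)
  case Nil
  have e: "{[]} = {xs. length xs = (0::nat)}" by auto
  show ?case unfolding e using structD(2)[OF S, of 0] by simp
next
  case (snoc a p)
  have "wf D (Suc (length p)) (Conj (Atom {p} [0..<length p]) (Atom {[a]} [length p]))"
    using snoc C by simp
  hence "dset D (Suc (length p)) (ev (Conj (Atom {p} [0..<length p]) (Atom {[a]} [length p])))"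
    by (rule dset_fm[OF S])
  moreover have "{xs. length xs = Suc (length p) \<and> ev (Conj (Atom {p} [0..<length p]) (Atom {[a]} [length p])) xs} = {p @ [a]}"
  proof (rule set_eqI, rule iffI)
    fix xs assume h: "xs \<in> {xs. length xs = Suc (length p) \<and> ev (Conj (Atom {p} [0..<length p]) (Atom {[a]} [length p])) xs}"
    hence l: "length xs = Suc (length p)" and e: "map (\<lambda>i. xs ! i) [0..<length p] = p" "xs ! length p = a" by auto
    have "take (length p) xs = p" using e(1) map_nth_upt[of 0 "length p" xs] l by simp
    moreover have "xs = take (length p) xs @ [xs ! length p]"
    proof -
      have "take (Suc (length p)) xs = take (length p) xs @ [xs ! length p]"
        by (rule take_Suc_conv_app_nth) (use l in simp)
      thus ?thesis using l by simp
    qed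
    ultimately show "xs \<in> {p @ [a]}" using e by auto
  next
    fix xs assume "xs \<in> {p @ [a]}"
    thus "xs \<in> {xs. length xs = Suc (length p) \<and> ev (Conj (Atom {p} [0..<length p]) (Atom {[a]} [length p])) xs}"
      by (auto simp: nth_append intro!: nth_equalityI)
  qed
  ultimately show ?case unfolding dset_def by simp
qed



definition infi :: "'a::linorder set \<Rightarrow> 'a" where
  "infi T = (SOME s. (\<forall>y\<in>T. s \<le> y) \<and> (\<forall>s'. (\<forall>y\<in>T. s' \<le> y) \<longrightarrow> s' \<le> s))"
definition supr :: "'a::linorder set \<Rightarrow> 'a" where
  "supr T = (SOME s. (\<forall>y\<in>T. y \<le> s) \<and> (\<forall>s'. (\<forall>y\<in>T. y \<le> s') \<longrightarrow> s \<le> s'))"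

definition blk :: "nat \<Rightarrow> nat \<Rightarrow> nat list" where "blk i k = [i..<i + k]"

lemma map_blk[simp]: "i + k \<le> length env \<Longrightarrow> map ((!) env) (blk i k) = take k (drop i env)"
  unfolding blk_def by (rule nth_equalityI) auto
lemma length_blk[simp]: "length (blk i k) = k" by (simp add: blk_def)
lemma set_blk[simp]: "set (blk i k) = {i..<i + k}" by (simp add: blk_def)

locale setting =
  fixes D :: "nat \<Rightarrow> ('m::{linorder,group_add}) list set set"
    and m n :: nat
    and G :: "'m list set" and dG :: "'m list \<Rightarrow> 'm list \<Rightarrow> 'm"
    and mul :: "'m list \<Rightarrow> 'm list \<Rightarrow> 'm list" and ginv :: "'m list \<Rightarrow> 'm list" and e :: "'m list"
    and X :: "'m list set" and dX :: "'m list \<Rightarrow> 'm list \<Rightarrow> 'm"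
    and act :: "'m list \<Rightarrow> 'm list \<Rightarrow> 'm list"
    and A :: "'m list set"
  assumes ordered_group: "\<forall>x y z::'m. x < y \<longrightarrow> z + x < z + y \<and> x + z < y + z"
    and dense: "\<forall>x y::'m. x < y \<longrightarrow> (\<exists>z. x < z \<and> z < y)"
    and no_endpoints: "\<forall>x::'m. \<exists>y z. y < x \<and> x < z"
    and D_structure: "is_structure D"
    and expansion: "expands_ordered_group D"
    and def_complete: "definably_complete D"
    and G_group: "def_metric_group D m G dG mul ginv e"
    and G_compact: "definably_compact D m G dG"
    and X_space: "def_metric_space D n X dX"
    and action: "def_action D m G dG mul e n X dX act"
    and A_def: "A \<in> D n"
    and A_closed: "closed_in_metric X dX A"
    and A_inv: "\<forall>g\<in>G. \<forall>x\<in>A. act g x \<in> A"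
begin

lemmas S = D_structure

lemma addL: "x < y \<Longrightarrow> z + x < z + (y::'m)" using ordered_group by blast
lemma addR: "x < y \<Longrightarrow> x + z < y + (z::'m)" using ordered_group by blast
lemma addR_le: "x \<le> y \<Longrightarrow> x + z \<le> y + (z::'m)"
proof (cases "x = y")
  case False
  assume "x \<le> y" hence "x < y" using False by simp
  thus ?thesis using addR less_imp_le by blast
qed simp
lemma pos_diff: "a < b \<Longrightarrow> 0 < b - (a::'m)"
  using addR[of a b "-a"] by simp
lemma sum_lt: "x < a \<Longrightarrow> y < b \<Longrightarrow> x + y < a + (b::'m)"
  using addR[of x a y] addL[of y b a] by simp
lemma cancel_lt: "H < H - a + Y \<Longrightarrow> a < (Y::'m)"
proof -
  assume "H < H - a + Y"
  hence "-H + H < -H + (H - a + Y)" by (rule addL)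
  moreover have "-H + (H - a + Y) = -a + Y" by (metis add.assoc minus_add_cancel diff_conv_add_uminus)
  ultimately have "0 < -a + Y" by simp
  hence "a + 0 < a + (-a + Y)" by (rule addL)
  thus ?thesis by simp
qed

lemma const_D: "{[a]} \<in> D 1" using expansion unfolding expands_ordered_group_def by blast
definition LessS :: "'m list set" where "LessS = {[x, y] | x y. x < y}"
lemma LessS_D: "LessS \<in> D 2" using expansion unfolding expands_ordered_group_def LessS_def by blast
lemma mem_LessS[simp]: "([p, q] \<in> LessS) = (p < q)" unfolding LessS_def by auto

lemma X_D: "X \<in> D n" using X_space unfolding def_metric_space_def by blast
lemma G_space: "def_metric_space D m G dG" using G_group unfolding def_metric_group_def by blast
lemma G_D: "G \<in> D m" using G_space unfolding def_metric_space_def by blast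

definition GdXS where "GdXS = {xs @ ys @ [dX xs ys] | xs ys. xs \<in> X \<and> ys \<in> X}"
definition GdGS where "GdGS = {xs @ ys @ [dG xs ys] | xs ys. xs \<in> G \<and> ys \<in> G}"
definition GactS where "GactS = {g @ x @ act g x | g x. g \<in> G \<and> x \<in> X}"
lemma GdXS_D: "GdXS \<in> D (2 * n + 1)" using X_space unfolding def_metric_space_def GdXS_def by blast
lemma GdGS_D: "GdGS \<in> D (2 * m + 1)" using G_space unfolding def_metric_space_def GdGS_def by blast
lemma GactS_D: "GactS \<in> D (m + n + n)" using action unfolding def_action_def GactS_def by blast

lemma Xlen: "x \<in> X \<Longrightarrow> length x = n" using structD(1)[OF S X_D] by blast
lemma Glen: "g \<in> G \<Longrightarrow> length g = m" using structD(1)[OF S G_D] by blast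
lemma AX: "A \<subseteq> X" using A_closed unfolding closed_in_metric_def by blast
lemma Alen: "a \<in> A \<Longrightarrow> length a = n" using AX Xlen by blast

lemma dX_props: "x \<in> X \<Longrightarrow> y \<in> X \<Longrightarrow> 0 \<le> dX x y \<and> (dX x y = 0 \<longleftrightarrow> x = y) \<and> dX x y = dX y x"
  using X_space unfolding def_metric_space_def by blast
lemma dX_tri: "x \<in> X \<Longrightarrow> y \<in> X \<Longrightarrow> z \<in> X \<Longrightarrow> dX x z \<le> dX x y + dX y z"
  using X_space unfolding def_metric_space_def by blast
lemma dG_props: "x \<in> G \<Longrightarrow> y \<in> G \<Longrightarrow> 0 \<le> dG x y \<and> (dG x y = 0 \<longleftrightarrow> x = y) \<and> dG x y = dG y x"
  using G_space unfolding def_metric_space_def by blast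
lemma dG_tri: "x \<in> G \<Longrightarrow> y \<in> G \<Longrightarrow> z \<in> G \<Longrightarrow> dG x z \<le> dG x y + dG y z"
  using G_space unfolding def_metric_space_def by blast

lemma mem_GdXS[simp]: "length p = n \<Longrightarrow> length q = n \<Longrightarrow> (p @ q @ [z] \<in> GdXS) = (p \<in> X \<and> q \<in> X \<and> z = dX p q)"
  unfolding GdXS_def
proof (rule iffI)
  assume l: "length p = n" "length q = n" and "p @ q @ [z] \<in> {xs @ ys @ [dX xs ys] | xs ys. xs \<in> X \<and> ys \<in> X}"
  then obtain xs ys where h: "p @ q @ [z] = xs @ ys @ [dX xs ys]" "xs \<in> X" "ys \<in> X" by blast
  have "p = xs" "q @ [z] = ys @ [dX xs ys]" using h l Xlen append_eq_append_conv by metis+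
  thus "p \<in> X \<and> q \<in> X \<and> z = dX p q" using h l Xlen by auto
qed auto

lemma mem_GdGS[simp]: "length p = m \<Longrightarrow> length q = m \<Longrightarrow> (p @ q @ [z] \<in> GdGS) = (p \<in> G \<and> q \<in> G \<and> z = dG p q)"
  unfolding GdGS_def
proof (rule iffI)
  assume l: "length p = m" "length q = m" and "p @ q @ [z] \<in> {xs @ ys @ [dG xs ys] | xs ys. xs \<in> G \<and> ys \<in> G}"
  then obtain xs ys where h: "p @ q @ [z] = xs @ ys @ [dG xs ys]" "xs \<in> G" "ys \<in> G" by blast
  have "p = xs" "q @ [z] = ys @ [dG xs ys]" using h l Glen append_eq_append_conv by metis+
  thus "p \<in> G \<and> q \<in> G \<and> z = dG p q" using h l Glen by auto
qed auto

lemma act_X: "g \<in> G \<Longrightarrow> x \<in> X \<Longrightarrow> act g x \<in> X" using action unfolding def_action_def by blast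
lemma act_e: "x \<in> X \<Longrightarrow> act e x = x" using action unfolding def_action_def by blast
lemma act_mul: "g \<in> G \<Longrightarrow> h \<in> G \<Longrightarrow> x \<in> X \<Longrightarrow> act (mul g h) x = act g (act h x)"
  using action unfolding def_action_def by blast
lemma act_cont: "mcont2 G dG X dX dX act" using action unfolding def_action_def by blast

lemma mem_GactS[simp]: "length g = m \<Longrightarrow> length x = n \<Longrightarrow> length w = n \<Longrightarrow> (g @ x @ w \<in> GactS) = (g \<in> G \<and> x \<in> X \<and> w = act g x)"
  unfolding GactS_def
proof (rule iffI)
  assume l: "length g = m" "length x = n" "length w = n" and "g @ x @ w \<in> {g @ x @ act g x | g x. g \<in> G \<and> x \<in> X}"
  then obtain g' x' where h: "g @ x @ w = g' @ x' @ act g' x'" "g' \<in> G" "x' \<in> X" by blast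
  have "g = g'" "x @ w = x' @ act g' x'" using h l Glen append_eq_append_conv by metis+
  moreover have "x = x'" "w = act g' x'" using calculation(2) l h(3) Xlen append_eq_append_conv by metis+
  ultimately show "g \<in> G \<and> x \<in> X \<and> w = act g x" using h by auto
qed auto

lemma e_G: "e \<in> G" using G_group unfolding def_metric_group_def by blast
lemma mul_G: "g \<in> G \<Longrightarrow> h \<in> G \<Longrightarrow> mul g h \<in> G" using G_group unfolding def_metric_group_def by blast
lemma ginv_G: "g \<in> G \<Longrightarrow> ginv g \<in> G" using G_group unfolding def_metric_group_def by blast
lemma mul_assoc: "g \<in> G \<Longrightarrow> h \<in> G \<Longrightarrow> k \<in> G \<Longrightarrow> mul (mul g h) k = mul g (mul h k)"
  using G_group unfolding def_metric_group_def by blast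
lemma mul_e: "g \<in> G \<Longrightarrow> mul e g = g \<and> mul g e = g" using G_group unfolding def_metric_group_def by blast
lemma mul_inv: "g \<in> G \<Longrightarrow> mul (ginv g) g = e \<and> mul g (ginv g) = e" using G_group unfolding def_metric_group_def by blast

lemma point: "length p = k \<Longrightarrow> {p} \<in> D k" using point_set[OF S] const_D by blast

lemmas dfm = dset_fm[OF S]

definition c0 :: 'm where "c0 = (SOME c. 0 < c)"
lemma c0_pos: "0 < c0"
proof -
  have "\<exists>c::'m. 0 < c" using no_endpoints by blast
  thus ?thesis unfolding c0_def by (rule someI_ex)
qed

definition TH :: "'m list \<Rightarrow> 'm set" where "TH x = insert c0 {dX x a | a. a \<in> A}"

lemma TH_def_M: assumes x: "x \<in> X" shows "definable_subset_M D (TH x)"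
proof -
  let ?phi = "Disj (Atom {[c0]} [0]) (Exs n (Conj (Atom {x} (blk 1 n)) (Exs n (Conj (Atom A (blk (1+n) n)) (Atom GdXS (blk 1 n @ blk (1+n) n @ [0]))))))"
  have "wf D 1 ?phi" using const_D point[of x n] Xlen[OF x] A_def GdXS_D by (auto simp: mult_2)
  hence d: "dset D 1 (ev ?phi)" by (rule dfm)
  have "{xs. length xs = 1 \<and> ev ?phi xs} = (\<lambda>y. [y]) ` TH x"
  proof (rule set_eqI)
    fix zs :: "'m list"
    show "zs \<in> {xs. length xs = 1 \<and> ev ?phi xs} \<longleftrightarrow> zs \<in> (\<lambda>y. [y]) ` TH x"
    proof (cases "length zs = 1")
      case True
      then obtain y where zs: "zs = [y]" by (metis One_nat_def length_0_conv length_Suc_conv)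
      have "ev ?phi [y] \<longleftrightarrow> y \<in> TH x"
        using x Xlen[OF x] unfolding TH_def apply (simp add: nth_append cong: conj_cong) using Alen AX by blast
      thus ?thesis using zs by auto
    next
      case False thus ?thesis by auto
    qed
  qed
  thus ?thesis using d unfolding definable_subset_M_def dset_def by simp
qed

end


lemma snoc_set:
  assumes d: "dset D (Suc k) Q" and eq: "\<And>w s. length w = k \<Longrightarrow> Q (w @ [s]) = P w s"
  shows "{w @ [s] | w s. length w = k \<and> P w s} \<in> D (Suc k)"
proof -
  have eqs: "{xs. length xs = Suc k \<and> Q xs} = {w @ [s] | w s. length w = k \<and> P w s}"
  proof (rule set_eqI, rule iffI)
    fix xs assume "xs \<in> {xs. length xs = Suc k \<and> Q xs}"
    hence l: "length xs = Suc k" and q: "Q xs" by auto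
    obtain w s where ws: "xs = w @ [s]" "length w = k" using length_Suc_snoc[THEN iffD1, OF l] by blast
    have "P w s" using eq[OF ws(2)] q ws(1) by simp
    thus "xs \<in> {w @ [s] | w s. length w = k \<and> P w s}" using ws by blast
  next
    fix xs assume "xs \<in> {w @ [s] | w s. length w = k \<and> P w s}"
    then obtain w s where ws: "xs = w @ [s]" "length w = k" "P w s" by blast
    have "Q xs" using eq[OF ws(2)] ws by simp
    thus "xs \<in> {xs. length xs = Suc k \<and> Q xs}" using ws by simp
  qed
  show ?thesis using d[unfolded dset_def eqs] .
qed

lemma cons_set:
  assumes d: "dset D (Suc k) Q" and eq: "\<And>t g. length g = k \<Longrightarrow> Q (t # g) = P t g"
  shows "{t # g | t g. length g = k \<and> P t g} \<in> D (Suc k)"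
proof -
  have eqs: "{xs. length xs = Suc k \<and> Q xs} = {t # g | t g. length g = k \<and> P t g}"
  proof (rule set_eqI, rule iffI)
    fix xs assume "xs \<in> {xs. length xs = Suc k \<and> Q xs}"
    hence l: "length xs = Suc k" and q: "Q xs" by auto
    obtain t g where tg: "xs = t # g" "length g = k" using l by (cases xs) auto
    have "P t g" using eq[OF tg(2)] q tg(1) by simp
    thus "xs \<in> {t # g | t g. length g = k \<and> P t g}" using tg by blast
  next
    fix xs assume "xs \<in> {t # g | t g. length g = k \<and> P t g}"
    then obtain t g where tg: "xs = t # g" "length g = k" "P t g" by blast
    have "Q xs" using eq[OF tg(2)] tg by simp
    thus "xs \<in> {xs. length xs = Suc k \<and> Q xs}" using tg by simp
  qed
  show ?thesis using d[unfolded dset_def eqs] .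
qed

lemma mem_snoc_set: "length w = k \<Longrightarrow> (w @ [s] \<in> {w @ [s] | w s. length w = k \<and> P w s}) = P w s"
  by (simp only: mem_Collect_eq append1_eq_conv) blast

lemma mem_cons_set: "length g = k \<Longrightarrow> (t # g \<in> {t # g | t g. length g = k \<and> P t g}) = P t g"
  by (simp only: mem_Collect_eq list.inject) blast

context setting
begin

lemma infi_prop:
  assumes "definable_subset_M D T" "T \<noteq> {}" "bdd_below T"
  shows "(\<forall>y\<in>T. infi T \<le> y) \<and> (\<forall>s'. (\<forall>y\<in>T. s' \<le> y) \<longrightarrow> s' \<le> infi T)"
proof -
  have "bdd_below T \<longrightarrow> (\<exists>s. (\<forall>y\<in>T. s \<le> y) \<and> (\<forall>s'. (\<forall>y\<in>T. s' \<le> y) \<longrightarrow> s' \<le> s))"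
    using def_complete[unfolded definably_complete_def, THEN spec[of _ T]] assms(1,2) by simp
  hence "\<exists>s. (\<forall>y\<in>T. s \<le> y) \<and> (\<forall>s'. (\<forall>y\<in>T. s' \<le> y) \<longrightarrow> s' \<le> s)" using assms(3) by blast
  thus ?thesis unfolding infi_def by (rule someI_ex)
qed

lemma supr_prop:
  assumes "definable_subset_M D T" "T \<noteq> {}" "bdd_above T"
  shows "(\<forall>y\<in>T. y \<le> supr T) \<and> (\<forall>s'. (\<forall>y\<in>T. y \<le> s') \<longrightarrow> supr T \<le> s')"
proof -
  have "bdd_above T \<longrightarrow> (\<exists>s. (\<forall>y\<in>T. y \<le> s) \<and> (\<forall>s'. (\<forall>y\<in>T. y \<le> s') \<longrightarrow> s \<le> s'))"
    using def_complete[unfolded definably_complete_def, THEN spec[of _ T]] assms(1,2) by simp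
  hence "\<exists>s. (\<forall>y\<in>T. y \<le> s) \<and> (\<forall>s'. (\<forall>y\<in>T. y \<le> s') \<longrightarrow> s \<le> s')" using assms(3) by blast
  thus ?thesis unfolding supr_def by (rule someI_ex)
qed

definition hh :: "'m list \<Rightarrow> 'm" where "hh x = infi (TH x)"

lemma hh_prop: assumes x: "x \<in> X"
  shows "(\<forall>y\<in>TH x. hh x \<le> y) \<and> (\<forall>s'. (\<forall>y\<in>TH x. s' \<le> y) \<longrightarrow> s' \<le> hh x)"
proof -
  have "bdd_below (TH x)" unfolding bdd_below_def TH_def
    using c0_pos dX_props x AX by (intro exI[of _ 0]) (auto simp: less_imp_le)
  thus ?thesis unfolding hh_def using infi_prop[OF TH_def_M[OF x]] by (simp add: TH_def)
qed

lemma hh_lb: "x \<in> X \<Longrightarrow> hh x \<le> c0 \<and> (\<forall>a\<in>A. hh x \<le> dX x a)"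
  using hh_prop unfolding TH_def by blast

lemma hh_glb: "x \<in> X \<Longrightarrow> s \<le> c0 \<Longrightarrow> (\<forall>a\<in>A. s \<le> dX x a) \<Longrightarrow> s \<le> hh x"
  using hh_prop unfolding TH_def by blast

lemma hh_nonneg: "x \<in> X \<Longrightarrow> 0 \<le> hh x"
proof -
  assume x: "x \<in> X"
  show "0 \<le> hh x"
  proof (rule hh_glb[OF x])
    show "0 \<le> c0" using c0_pos by simp
    show "\<forall>a\<in>A. 0 \<le> dX x a" using dX_props[OF x] AX by blast
  qed
qed

lemma hh_zero: assumes x: "x \<in> X" shows "hh x = 0 \<longleftrightarrow> x \<in> A"
proof
  assume "x \<in> A"
  hence "hh x \<le> 0" using hh_lb[OF x] dX_props[OF x x] by force
  thus "hh x = 0" using hh_nonneg[OF x] by simp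
next
  assume h0: "hh x = 0"
  show "x \<in> A"
  proof (rule ccontr)
    assume "x \<notin> A"
    then obtain r where r: "0 < r" "\<forall>y\<in>X. dX x y < r \<longrightarrow> y \<notin> A"
      using A_closed x unfolding closed_in_metric_def by blast
    have "min r c0 \<le> hh x"
      apply (rule hh_glb[OF x])
      using r AX by (auto simp: min_le_iff_disj not_less)
    thus False using h0 r(1) c0_pos by (metis min_le_iff_disj not_le)
  qed
qed

lemma hh_lower: assumes x: "x \<in> X" and a: "a < hh x"
  shows "\<exists>\<delta>>0. \<forall>z\<in>X. dX x z < \<delta> \<longrightarrow> a < hh z"
proof -
  obtain a' where a': "a < a'" "a' < hh x" using dense a by blast
  have pos: "0 < hh x - a'" using pos_diff[OF a'(2)] .
  have "\<forall>z\<in>X. dX x z < hh x - a' \<longrightarrow> a < hh z"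
  proof (intro ballI impI)
    fix z assume z: "z \<in> X" "dX x z < hh x - a'"
    have "a' \<le> hh z"
    proof (rule hh_glb[OF z(1)])
      have "hh x \<le> c0" using hh_lb[OF x] by simp
      thus "a' \<le> c0" using a'(2) by simp
      show "\<forall>p\<in>A. a' \<le> dX z p"
      proof
        fix p assume p: "p \<in> A"
        have "hh x \<le> dX x p" using hh_lb[OF x] p by blast
        also have "\<dots> \<le> dX x z + dX z p" using dX_tri x z p AX by blast
        also have "\<dots> < hh x - a' + dX z p" by (rule addR[OF z(2)])
        finally show "a' \<le> dX z p" using cancel_lt less_imp_le by blast
      qed
    qed
    thus "a < hh z" using a'(1) by simp
  qed
  thus ?thesis using pos by blast
qed

lemma hh_upper: assumes x: "x \<in> X" and b: "hh x < b"
  shows "\<exists>\<delta>>0. \<forall>z\<in>X. dX x z < \<delta> \<longrightarrow> hh z < b"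
proof (cases "c0 < b")
  case True
  have "\<forall>z\<in>X. dX x z < c0 \<longrightarrow> hh z < b" using hh_lb True by (blast intro: le_less_trans)
  thus ?thesis using c0_pos by blast
next
  case False
  have "\<exists>p\<in>A. dX x p < b"
  proof (rule ccontr)
    assume "\<not> (\<exists>p\<in>A. dX x p < b)"
    hence "b \<le> hh x" using False by (intro hh_glb[OF x]) (auto simp: not_less)
    thus False using b by simp
  qed
  then obtain p where p: "p \<in> A" "dX x p < b" by blast
  have "\<forall>z\<in>X. dX x z < b - dX x p \<longrightarrow> hh z < b"
  proof (intro ballI impI)
    fix z assume z: "z \<in> X" "dX x z < b - dX x p"
    have "hh z \<le> dX z p" using hh_lb[OF z(1)] p by blast
    also have "\<dots> \<le> dX z x + dX x p" using dX_tri x z p AX by blast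
    also have "\<dots> = dX x z + dX x p" using dX_props x z by simp
    also have "\<dots> < b - dX x p + dX x p" by (rule addR[OF z(2)])
    finally show "hh z < b" by simp
  qed
  thus ?thesis using pos_diff[OF p(2)] by blast
qed

end


context setting
begin

definition LBS where "LBS = {w @ [s] | w s. length w = n \<and> (w \<in> X \<and> s \<le> c0 \<and> (\<forall>a\<in>A. s \<le> dX w a))}"

lemma LBS_D: "LBS \<in> D (Suc n)"
  unfolding LBS_def
proof (rule snoc_set)
  let ?phi = "Conj (Atom X (blk 0 n)) (Conj (Neg (Exi (Conj (Atom {[c0]} [Suc n]) (Atom LessS [Suc n, n]))))
     (Neg (Exs n (Conj (Atom A (blk (Suc n) n)) (Exi (Conj (Atom GdXS (blk 0 n @ blk (Suc n) n @ [Suc n + n])) (Atom LessS [Suc n + n, n])))))))"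
  have "wf D (Suc n) ?phi" using const_D X_D A_def GdXS_D LessS_D by (auto simp: mult_2 numeral_2_eq_2)
  thus "dset D (Suc n) (ev ?phi)" by (rule dfm)
  fix w :: "'m list" and s :: 'm assume w: "length w = n"
  show "ev ?phi (w @ [s]) = (w \<in> X \<and> s \<le> c0 \<and> (\<forall>a\<in>A. s \<le> dX w a))"
    using w apply (simp add: nth_append cong: conj_cong)
    using AX Alen by (auto simp: not_less)
qed

lemma mem_LBS: "length w = n \<Longrightarrow> (w @ [s] \<in> LBS) = (w \<in> X \<and> s \<le> c0 \<and> (\<forall>a\<in>A. s \<le> dX w a))"
  unfolding LBS_def by (rule mem_snoc_set)

definition Hg where "Hg = {w @ [u] | w u. length w = n \<and> (w \<in> X \<and> u = hh w)}"

lemma Hg_D: "Hg \<in> D (Suc n)"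
  unfolding Hg_def
proof (rule snoc_set)
  let ?phi = "Conj (Atom LBS (blk 0 (Suc n))) (Neg (Exi (Conj (Atom LBS (blk 0 n @ [Suc n])) (Atom LessS [n, Suc n]))))"
  have "wf D (Suc n) ?phi" using LBS_D LessS_D by (auto simp: numeral_2_eq_2)
  thus "dset D (Suc n) (ev ?phi)" by (rule dfm)
  fix w :: "'m list" and u :: 'm assume w: "length w = n"
  have "ev ?phi (w @ [u]) = (w @ [u] \<in> LBS \<and> \<not> (\<exists>s. w @ [s] \<in> LBS \<and> u < s))"
    using w by (simp add: nth_append cong: conj_cong)
  also have "\<dots> = (w \<in> X \<and> u = hh w)"
  proof
    assume h: "w @ [u] \<in> LBS \<and> \<not> (\<exists>s. w @ [s] \<in> LBS \<and> u < s)"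
    hence wX: "w \<in> X" and lb: "u \<le> c0" "\<forall>a\<in>A. u \<le> dX w a" using mem_LBS[OF w] by auto
    have "u \<le> hh w" using hh_glb[OF wX lb] .
    moreover have "w @ [hh w] \<in> LBS" using mem_LBS[OF w] hh_lb[OF wX] wX by simp
    hence "\<not> u < hh w" using h by blast
    ultimately show "w \<in> X \<and> u = hh w" using wX by simp
  next
    assume h: "w \<in> X \<and> u = hh w"
    hence "w @ [u] \<in> LBS" using mem_LBS[OF w] hh_lb by simp
    moreover have "\<not> (\<exists>s. w @ [s] \<in> LBS \<and> u < s)"
    proof
      assume "\<exists>s. w @ [s] \<in> LBS \<and> u < s"
      then obtain s where "w @ [s] \<in> LBS" "u < s" by blast
      hence "s \<le> hh w" using mem_LBS[OF w] hh_glb h by simp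
      thus False using \<open>u < s\<close> h by simp
    qed
    ultimately show "w @ [u] \<in> LBS \<and> \<not> (\<exists>s. w @ [s] \<in> LBS \<and> u < s)" by blast
  qed
  finally show "ev ?phi (w @ [u]) = (w \<in> X \<and> u = hh w)" .
qed

lemma mem_Hg: "length w = n \<Longrightarrow> (w @ [u] \<in> Hg) = (w \<in> X \<and> u = hh w)"
  unfolding Hg_def by (rule mem_snoc_set)

definition TF :: "'m list \<Rightarrow> 'm set" where "TF x = {hh (act g x) | g. g \<in> G}"

lemma TF_def_M: assumes x: "x \<in> X" shows "definable_subset_M D (TF x)"
proof -
  let ?phi = "Exs n (Conj (Atom {x} (blk 1 n)) (Exs m (Conj (Atom G (blk (1+n) m))
     (Exs n (Conj (Atom GactS (blk (1+n) m @ blk 1 n @ blk (1+n+m) n)) (Atom Hg (blk (1+n+m) n @ [0])))))))"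
  have "wf D 1 ?phi" using point[of x n] Xlen[OF x] G_D GactS_D Hg_D by (auto simp: add.assoc)
  hence d: "dset D 1 (ev ?phi)" by (rule dfm)
  have "{xs. length xs = 1 \<and> ev ?phi xs} = (\<lambda>y. [y]) ` TF x"
  proof (rule set_eqI)
    fix zs :: "'m list"
    show "zs \<in> {xs. length xs = 1 \<and> ev ?phi xs} \<longleftrightarrow> zs \<in> (\<lambda>y. [y]) ` TF x"
    proof (cases "length zs = 1")
      case True
      then obtain y where zs: "zs = [y]" by (metis One_nat_def length_0_conv length_Suc_conv)
      have "ev ?phi [y] \<longleftrightarrow> y \<in> TF x"
        using x Xlen[OF x] unfolding TF_def apply (simp add: nth_append mem_Hg cong: conj_cong)
        apply (rule iffI)
         apply blast
        apply (elim exE conjE)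
        subgoal for g apply (rule exI[of _ g]) using Glen act_X Xlen by simp
        done
      thus ?thesis using zs by auto
    next
      case False thus ?thesis by auto
    qed
  qed
  thus ?thesis using d unfolding definable_subset_M_def dset_def by simp
qed

definition ff :: "'m list \<Rightarrow> 'm" where "ff x = supr (TF x)"

lemma ff_prop: assumes x: "x \<in> X"
  shows "(\<forall>y\<in>TF x. y \<le> ff x) \<and> (\<forall>s'. (\<forall>y\<in>TF x. y \<le> s') \<longrightarrow> ff x \<le> s')"
proof -
  have ne: "TF x \<noteq> {}" unfolding TF_def using e_G by blast
  have "bdd_above (TF x)" unfolding bdd_above_def TF_def
    using hh_lb act_X x by (intro exI[of _ c0]) auto
  thus ?thesis unfolding ff_def using supr_prop[OF TF_def_M[OF x] ne] by simp
qed

lemma ff_ub: "x \<in> X \<Longrightarrow> g \<in> G \<Longrightarrow> hh (act g x) \<le> ff x"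
  using ff_prop unfolding TF_def by blast

lemma ff_lub: "x \<in> X \<Longrightarrow> (\<forall>g\<in>G. hh (act g x) \<le> s) \<Longrightarrow> ff x \<le> s"
  using ff_prop unfolding TF_def by blast

lemma ff_inv: assumes g: "g \<in> G" and x: "x \<in> X" shows "ff (act g x) = ff x"
proof -
  have "TF (act g x) = TF x"
  proof (rule set_eqI, rule iffI)
    fix y assume "y \<in> TF (act g x)"
    then obtain g' where g': "g' \<in> G" "y = hh (act g' (act g x))" unfolding TF_def by blast
    hence "y = hh (act (mul g' g) x)" using act_mul g x by simp
    thus "y \<in> TF x" unfolding TF_def using mul_G[OF g'(1) g] by blast
  next
    fix y assume "y \<in> TF x"
    then obtain g' where g': "g' \<in> G" "y = hh (act g' x)" unfolding TF_def by blast
    let ?k = "mul g' (ginv g)"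
    have k: "?k \<in> G" using mul_G ginv_G g g' by blast
    have "act ?k (act g x) = act (mul ?k g) x" using act_mul k g x by simp
    also have "mul ?k g = mul g' (mul (ginv g) g)" using mul_assoc g' ginv_G g by blast
    also have "\<dots> = g'" using mul_inv g mul_e g' by simp
    finally have "y = hh (act ?k (act g x))" using g' by simp
    thus "y \<in> TF (act g x)" unfolding TF_def using k by blast
  qed
  thus ?thesis unfolding ff_def by simp
qed

lemma ff_nonneg: "x \<in> X \<Longrightarrow> hh x \<le> ff x"
  using ff_ub[OF _ e_G] act_e by fastforce

lemma ff_zero: assumes x: "x \<in> X" shows "ff x = 0 \<longleftrightarrow> x \<in> A"
proof
  assume "x \<in> A"
  hence "\<forall>g\<in>G. hh (act g x) \<le> 0"
  proof (intro ballI)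
    fix g assume g: "g \<in> G" and xa: "x \<in> A"
    have "act g x \<in> A" using A_inv g xa by blast
    hence "hh (act g x) = 0" using hh_zero AX by blast
    thus "hh (act g x) \<le> 0" by simp
  qed
  hence "ff x \<le> 0" using ff_lub[OF x] by blast
  moreover have "0 \<le> ff x" using ff_nonneg[OF x] hh_nonneg[OF x] by simp
  ultimately show "ff x = 0" by simp
next
  assume f0: "ff x = 0"
  have "hh x \<le> 0" using ff_nonneg[OF x] f0 by simp
  hence "hh x = 0" using hh_nonneg[OF x] by simp
  thus "x \<in> A" using hh_zero[OF x] by simp
qed

definition UBS where "UBS = {w @ [s] | w s. length w = n \<and> (w \<in> X \<and> (\<forall>g\<in>G. hh (act g w) \<le> s))}"

lemma UBS_D: "UBS \<in> D (Suc n)"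
  unfolding UBS_def
proof (rule snoc_set)
  let ?phi = "Conj (Atom X (blk 0 n)) (Neg (Exs m (Conj (Atom G (blk (Suc n) m)) (Exs n (Conj (Atom GactS (blk (Suc n) m @ blk 0 n @ blk (Suc n + m) n))
     (Exi (Conj (Atom Hg (blk (Suc n + m) n @ [Suc n + m + n])) (Atom LessS [n, Suc n + m + n]))))))))"
  have "wf D (Suc n) ?phi" using X_D G_D GactS_D Hg_D LessS_D by (auto simp: add.assoc numeral_2_eq_2)
  thus "dset D (Suc n) (ev ?phi)" by (rule dfm)
  fix w :: "'m list" and s :: 'm assume w: "length w = n"
  show "ev ?phi (w @ [s]) = (w \<in> X \<and> (\<forall>g\<in>G. hh (act g w) \<le> s))"
    using w apply (simp add: nth_append mem_Hg cong: conj_cong)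
    apply (rule conj_cong[OF refl])
  proof
    assume wX: "w \<in> X" and H: "\<forall>ys. act ys w \<in> X \<longrightarrow> length (act ys w) = n \<longrightarrow> ys \<in> G \<longrightarrow> length ys = m \<longrightarrow> \<not> s < hh (act ys w)"
    show "\<forall>g\<in>G. hh (act g w) \<le> s"
    proof
      fix g assume g: "g \<in> G"
      have "act g w \<in> X" "length (act g w) = n" "length g = m" using act_X[OF g wX] Xlen Glen[OF g] by auto
      thus "hh (act g w) \<le> s" using H g by (simp add: not_less)
    qed
  next
    assume wX: "w \<in> X" and H: "\<forall>g\<in>G. hh (act g w) \<le> s"
    show "\<forall>ys. act ys w \<in> X \<longrightarrow> length (act ys w) = n \<longrightarrow> ys \<in> G \<longrightarrow> length ys = m \<longrightarrow> \<not> s < hh (act ys w)"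
      using H by (simp add: not_less)
  qed
qed

lemma mem_UBS: "length w = n \<Longrightarrow> (w @ [s] \<in> UBS) = (w \<in> X \<and> (\<forall>g\<in>G. hh (act g w) \<le> s))"
  unfolding UBS_def by (rule mem_snoc_set)

lemma ff_graph: "def_function_to_M D n X ff"
proof -
  have "{w @ [t] | w t. length w = n \<and> (w \<in> X \<and> t = ff w)} \<in> D (Suc n)"
  proof (rule snoc_set)
    let ?phi = "Conj (Atom UBS (blk 0 (Suc n))) (Neg (Exi (Conj (Atom UBS (blk 0 n @ [Suc n])) (Atom LessS [Suc n, n]))))"
    have "wf D (Suc n) ?phi" using UBS_D LessS_D by (auto simp: numeral_2_eq_2)
    thus "dset D (Suc n) (ev ?phi)" by (rule dfm)
    fix w :: "'m list" and t :: 'm assume w: "length w = n"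
    have "ev ?phi (w @ [t]) = (w @ [t] \<in> UBS \<and> \<not> (\<exists>s. w @ [s] \<in> UBS \<and> s < t))"
      using w by (simp add: nth_append cong: conj_cong)
    also have "\<dots> = (w \<in> X \<and> t = ff w)"
    proof
      assume h: "w @ [t] \<in> UBS \<and> \<not> (\<exists>s. w @ [s] \<in> UBS \<and> s < t)"
      hence wX: "w \<in> X" and ub: "\<forall>g\<in>G. hh (act g w) \<le> t" using mem_UBS[OF w] by auto
      have "ff w \<le> t" using ff_lub[OF wX ub] .
      moreover have "w @ [ff w] \<in> UBS" using mem_UBS[OF w] ff_ub wX by simp
      hence "\<not> ff w < t" using h by blast
      ultimately show "w \<in> X \<and> t = ff w" using wX by simp
    next
      assume h: "w \<in> X \<and> t = ff w"
      hence "w @ [t] \<in> UBS" using mem_UBS[OF w] ff_ub by simp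
      moreover have "\<not> (\<exists>s. w @ [s] \<in> UBS \<and> s < t)"
      proof
        assume "\<exists>s. w @ [s] \<in> UBS \<and> s < t"
        then obtain s where "w @ [s] \<in> UBS" "s < t" by blast
        hence "ff w \<le> s" using mem_UBS[OF w] ff_lub h by simp
        thus False using \<open>s < t\<close> h by simp
      qed
      ultimately show "w @ [t] \<in> UBS \<and> \<not> (\<exists>s. w @ [s] \<in> UBS \<and> s < t)" by blast
    qed
    finally show "ev ?phi (w @ [t]) = (w \<in> X \<and> t = ff w)" .
  qed
  moreover have "{w @ [t] | w t. length w = n \<and> (w \<in> X \<and> t = ff w)} = {xs @ [ff xs] | xs. xs \<in> X}"
  proof (rule set_eqI, rule iffI)
    fix z assume "z \<in> {w @ [t] | w t. length w = n \<and> (w \<in> X \<and> t = ff w)}"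
    then obtain w t where "z = w @ [t]" "w \<in> X" "t = ff w" by blast
    thus "z \<in> {xs @ [ff xs] | xs. xs \<in> X}" by blast
  next
    fix z assume "z \<in> {xs @ [ff xs] | xs. xs \<in> X}"
    then obtain w where "z = w @ [ff w]" "w \<in> X" by blast
    thus "z \<in> {w @ [t] | w t. length w = n \<and> (w \<in> X \<and> t = ff w)}" using Xlen by blast
  qed
  ultimately show ?thesis unfolding def_function_to_M_def by simp
qed

end


context setting
begin

definition EE where "EE x0 b' t = {g \<in> G. \<exists>y\<in>X. dX x0 y < t \<and> b' \<le> hh (act g y)}"
definition CC where "CC x0 b' t = {g \<in> G. \<forall>r>0. \<exists>g'\<in>EE x0 b' t. dG g g' < r}"
definition ESet where "ESet x0 b' = {t # g | t g. length g = m \<and> g \<in> EE x0 b' t}"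
definition CSet where "CSet x0 b' = {t # g | t g. length g = m \<and> (0 < t \<and> g \<in> CC x0 b' t)}"

lemma ESet_D: assumes x0: "x0 \<in> X" shows "ESet x0 b' \<in> D (Suc m)"
  unfolding ESet_def
proof (rule cons_set)
  let ?phi = "Conj (Atom G (blk 1 m)) (Exs n (Conj (Atom X (blk (Suc m) n)) (Conj
      (Exs n (Conj (Atom {x0} (blk (Suc m+n) n)) (Exi (Conj (Atom GdXS (blk (Suc m+n) n @ blk (Suc m) n @ [Suc m+n+n])) (Atom LessS [Suc m+n+n, 0])))))
      (Exs n (Conj (Atom GactS (blk 1 m @ blk (Suc m) n @ blk (Suc m+n) n)) (Exi (Conj (Atom Hg (blk (Suc m+n) n @ [Suc m+n+n]))
         (Neg (Exi (Conj (Atom {[b']} [Suc (Suc m+n+n)]) (Atom LessS [Suc m+n+n, Suc (Suc m+n+n)])))))))))))"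
  have "wf D (Suc m) ?phi" using const_D point[of x0 n] Xlen[OF x0] X_D G_D GdXS_D GactS_D Hg_D LessS_D
    by (auto simp: add.assoc numeral_2_eq_2 mult_2)
  thus "dset D (Suc m) (ev ?phi)" by (rule dfm)
  fix t :: 'm and g :: "'m list" assume g: "length g = m"
  show "ev ?phi (t # g) = (g \<in> EE x0 b' t)"
    using g x0 Xlen[OF x0] unfolding EE_def apply (simp add: nth_append mem_Hg cong: conj_cong)
    apply (rule conj_cong[OF refl])
    apply (rule iffI)
     apply (elim exE conjE)
     subgoal for ys by (rule bexI[of _ ys]) (simp_all add: not_less)
    apply (elim bexE conjE)
    subgoal for y apply (rule exI[of _ y]) using act_X Xlen by (simp add: not_less)
    done
qed

lemma mem_ESet: "length g = m \<Longrightarrow> (t # g \<in> ESet x0 b') = (g \<in> EE x0 b' t)"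
  unfolding ESet_def by (rule mem_cons_set)

lemma EE_G: "g \<in> EE x0 b' t \<Longrightarrow> g \<in> G" unfolding EE_def by blast

lemma EE_simp: "(ys \<in> G \<and> ys \<in> EE x0 b' t \<and> length ys = m \<and> P) = (ys \<in> EE x0 b' t \<and> P)"
  using EE_G Glen by blast

lemma CSet_D: assumes x0: "x0 \<in> X" shows "CSet x0 b' \<in> D (Suc m)"
  unfolding CSet_def
proof (rule cons_set)
  let ?phi = "Conj (Exi (Conj (Atom {[0]} [Suc m]) (Atom LessS [Suc m, 0]))) (Conj (Atom G (blk 1 m)) (Neg (Exi (Conj (Exi (Conj (Atom {[0]} [Suc (Suc m)]) (Atom LessS [Suc (Suc m), Suc m]))) (Neg (Exs m (Conj (Atom (ESet x0 b') ([0] @ blk (Suc (Suc m)) m)) (Exi (Conj (Atom GdGS (blk 1 m @ blk (Suc (Suc m)) m @ [Suc (Suc m) + m])) (Atom LessS [Suc (Suc m) + m, Suc m]))))))))))"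
  have "wf D (Suc m) ?phi" using const_D G_D GdGS_D ESet_D[OF x0] LessS_D
    by (auto simp: add.assoc numeral_2_eq_2 mult_2)
  thus "dset D (Suc m) (ev ?phi)" by (rule dfm)
  fix t :: 'm and g :: "'m list" assume g: "length g = m"
  show "ev ?phi (t # g) = (0 < t \<and> g \<in> CC x0 b' t)"
    using g unfolding CC_def by (simp add: nth_append mem_ESet EE_simp Bex_def cong: conj_cong)
qed

lemma act_cont': assumes "g \<in> G" "x \<in> X" "0 < \<epsilon>"
  shows "\<exists>\<delta>>0. \<forall>g'\<in>G. \<forall>y\<in>X. dG g g' < \<delta> \<longrightarrow> dX x y < \<delta> \<longrightarrow> dX (act g x) (act g' y) < \<epsilon>"
  using act_cont assms unfolding mcont2_def by blast

lemma exists_big: assumes x: "x \<in> X" and a: "a < ff x" shows "\<exists>g\<in>G. a < hh (act g x)"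
proof (rule ccontr)
  assume "\<not> (\<exists>g\<in>G. a < hh (act g x))"
  hence "\<forall>g\<in>G. hh (act g x) \<le> a" by (simp add: not_less)
  hence "ff x \<le> a" by (rule ff_lub[OF x])
  thus False using a by simp
qed

lemma ff_lower: assumes x: "x \<in> X" and a: "a < ff x"
  shows "\<exists>\<delta>>0. \<forall>y\<in>X. dX x y < \<delta> \<longrightarrow> a < ff y"
proof -
  obtain g where g: "g \<in> G" "a < hh (act g x)" using exists_big[OF x a] by blast
  have w: "act g x \<in> X" using act_X g x by blast
  obtain d1 where d1: "0 < d1" "\<forall>z\<in>X. dX (act g x) z < d1 \<longrightarrow> a < hh z" using hh_lower[OF w g(2)] by blast
  obtain d2 where d2: "0 < d2" "\<forall>g'\<in>G. \<forall>y\<in>X. dG g g' < d2 \<longrightarrow> dX x y < d2 \<longrightarrow> dX (act g x) (act g' y) < d1"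
    using act_cont'[OF g(1) x d1(1)] by blast
  have "\<forall>y\<in>X. dX x y < d2 \<longrightarrow> a < ff y"
  proof (intro ballI impI)
    fix y assume y: "y \<in> X" "dX x y < d2"
    have "dG g g = 0" using dG_props g(1) by blast
    hence "dX (act g x) (act g y) < d1" using d2 g(1) y by simp
    hence "a < hh (act g y)" using d1(2) act_X g(1) y(1) by blast
    also have "\<dots> \<le> ff y" using ff_ub y(1) g(1) by blast
    finally show "a < ff y" .
  qed
  thus ?thesis using d2(1) by blast
qed

lemma EE_mono: "t \<le> t' \<Longrightarrow> EE x0 b' t \<subseteq> EE x0 b' t'"
  unfolding EE_def using order.strict_trans2 by blast

lemma CC_mono: "t \<le> t' \<Longrightarrow> CC x0 b' t \<subseteq> CC x0 b' t'"
  unfolding CC_def using EE_mono by blast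

lemma EE_CC: "EE x0 b' t \<subseteq> CC x0 b' t"
proof
  fix g assume g: "g \<in> EE x0 b' t"
  hence gG: "g \<in> G" by (rule EE_G)
  have "dG g g = 0" using dG_props gG by blast
  hence "\<forall>r>0. \<exists>g'\<in>EE x0 b' t. dG g g' < r" using g by (intro allI impI bexI[of _ g]) auto
  thus "g \<in> CC x0 b' t" unfolding CC_def using gG by blast
qed

lemma CC_closed: "closed_in_metric G dG (CC x0 b' t)"
  unfolding closed_in_metric_def
proof (intro conjI ballI)
  show "CC x0 b' t \<subseteq> G" unfolding CC_def by blast
  fix g assume g: "g \<in> G - CC x0 b' t"
  then obtain r where r: "0 < r" "\<forall>g'\<in>EE x0 b' t. \<not> dG g g' < r" unfolding CC_def by auto
  obtain s where s: "0 < s" "s < r" using dense r(1) by blast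
  have "\<forall>y\<in>G. dG g y < r - s \<longrightarrow> y \<notin> CC x0 b' t"
  proof (intro ballI impI notI)
    fix y assume y: "y \<in> G" "dG g y < r - s" "y \<in> CC x0 b' t"
    then obtain g' where g': "g' \<in> EE x0 b' t" "dG y g' < s" using s(1) unfolding CC_def by blast
    have "dG g g' \<le> dG g y + dG y g'" using dG_tri g y(1) EE_G[OF g'(1)] by blast
    also have "\<dots> < r - s + s" by (rule sum_lt[OF y(2) g'(2)])
    finally show False using r(2) g'(1) by simp
  qed
  thus "\<exists>r>0. \<forall>y\<in>G. dG g y < r \<longrightarrow> y \<notin> CC x0 b' t" using pos_diff[OF s(2)] by blast
qed

lemma CC_len: "g \<in> CC x0 b' t \<Longrightarrow> length g = m" unfolding CC_def using Glen by blast

lemma fib: "{x. [t] @ x \<in> CSet x0 b'} = (if 0 < t then CC x0 b' t else {})"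
  unfolding CSet_def using CC_len by auto

lemma ff_upper: assumes x0: "x0 \<in> X" and b: "ff x0 < b"
  shows "\<exists>\<delta>>0. \<forall>y\<in>X. dX x0 y < \<delta> \<longrightarrow> ff y < b"
proof (rule ccontr)
  assume nc: "\<not> (\<exists>\<delta>>0. \<forall>y\<in>X. dX x0 y < \<delta> \<longrightarrow> ff y < b)"
  obtain b' where b': "ff x0 < b'" "b' < b" using dense b by blast
  have Ene: "EE x0 b' t \<noteq> {}" if t: "0 < t" for t
  proof -
    have "\<not> (\<forall>y\<in>X. dX x0 y < t \<longrightarrow> ff y < b)" using nc t by blast
    then obtain y where y: "y \<in> X" "dX x0 y < t" "\<not> ff y < b" by blast
    have "b \<le> ff y" using y(3) by (simp add: not_less)
    hence "b' < ff y" using b'(2) by (rule order.strict_trans2[rotated])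
    then obtain g where g: "g \<in> G" "b' < hh (act g y)" using exists_big[OF y(1)] by blast
    have "g \<in> EE x0 b' t" unfolding EE_def using g(1) y(1,2) less_imp_le[OF g(2)] by blast
    thus ?thesis by blast
  qed
  have Cne: "CC x0 b' t \<noteq> {}" if t: "0 < t" for t using Ene[OF t] EE_CC by blast
  define Fam where "Fam = (\<lambda>t. {x. t @ x \<in> CSet x0 b'}) ` {t. length t = 1 \<and> (\<exists>x. t @ x \<in> CSet x0 b')}"
  have FamEq: "Fam = {CC x0 b' \<tau> | \<tau>. 0 < \<tau>}"
  proof (rule set_eqI, rule iffI)
    fix F assume "F \<in> Fam"
    then obtain t where t: "length t = 1" "\<exists>x. t @ x \<in> CSet x0 b'" "F = {x. t @ x \<in> CSet x0 b'}"
      unfolding Fam_def by blast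
    obtain \<tau> where tau: "t = [\<tau>]" using t(1) by (metis One_nat_def length_0_conv length_Suc_conv)
    obtain x where x: "[\<tau>] @ x \<in> CSet x0 b'" using t(2) tau by blast
    have "x \<in> {x. [\<tau>] @ x \<in> CSet x0 b'}" using x by simp
    hence pos: "0 < \<tau>" unfolding fib by (cases "0 < \<tau>") auto
    have "F = CC x0 b' \<tau>" using t(3) tau fib[of \<tau> x0 b'] pos by simp
    thus "F \<in> {CC x0 b' \<tau> | \<tau>. 0 < \<tau>}" using pos by blast
  next
    fix F assume "F \<in> {CC x0 b' \<tau> | \<tau>. 0 < \<tau>}"
    then obtain \<tau> where tau: "0 < \<tau>" "F = CC x0 b' \<tau>" by blast
    obtain g where g: "g \<in> CC x0 b' \<tau>" using Cne[OF tau(1)] by blast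
    have Feq: "F = {x. [\<tau>] @ x \<in> CSet x0 b'}" using tau fib[of \<tau> x0 b'] by simp
    hence "[\<tau>] @ g \<in> CSet x0 b'" using g tau(2) by blast
    hence "[\<tau>] \<in> {t. length t = 1 \<and> (\<exists>x. t @ x \<in> CSet x0 b')}" by auto
    thus "F \<in> Fam" unfolding Fam_def using Feq by blast
  qed
  have SD: "CSet x0 b' \<in> D (1 + m)" using CSet_D[OF x0] by simp
  have compact: "(\<forall>F\<in>Fam. F \<noteq> {} \<and> closed_in_metric G dG F) \<longrightarrow>
      (\<forall>F1\<in>Fam. \<forall>F2\<in>Fam. \<exists>F3\<in>Fam. F3 \<subseteq> F1 \<inter> F2) \<longrightarrow> (\<exists>x\<in>G. \<forall>F\<in>Fam. x \<in> F)"
    using G_compact[unfolded definably_compact_def Let_def, THEN spec[of _ 1], THEN spec[of _ "CSet x0 b'"], THEN mp, OF SD]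
    unfolding Fam_def .
  have h1: "\<forall>F\<in>Fam. F \<noteq> {} \<and> closed_in_metric G dG F" unfolding FamEq using Cne CC_closed by blast
  have h2: "\<forall>F1\<in>Fam. \<forall>F2\<in>Fam. \<exists>F3\<in>Fam. F3 \<subseteq> F1 \<inter> F2"
  proof (intro ballI)
    fix F1 F2 assume "F1 \<in> Fam" "F2 \<in> Fam"
    then obtain t1 t2 where t: "0 < t1" "F1 = CC x0 b' t1" "0 < t2" "F2 = CC x0 b' t2" unfolding FamEq by blast
    have "0 < min t1 t2" using t by simp
    hence "CC x0 b' (min t1 t2) \<in> Fam" unfolding FamEq by blast
    moreover have "CC x0 b' (min t1 t2) \<subseteq> F1 \<inter> F2" using CC_mono[of "min t1 t2"] t by auto
    ultimately show "\<exists>F3\<in>Fam. F3 \<subseteq> F1 \<inter> F2" by blast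
  qed
  obtain g0 where g0: "g0 \<in> G" "\<forall>F\<in>Fam. g0 \<in> F" using compact h1 h2 by blast
  have g0C: "g0 \<in> CC x0 b' \<tau>" if "0 < \<tau>" for \<tau> using g0(2) that unfolding FamEq by blast
  have "hh (act g0 x0) < b'" using ff_ub[OF x0 g0(1)] b'(1) by (rule order.strict_trans1)
  then obtain d1 where d1: "0 < d1" "\<forall>z\<in>X. dX (act g0 x0) z < d1 \<longrightarrow> hh z < b'"
    using hh_upper[OF act_X[OF g0(1) x0]] by blast
  obtain d2 where d2: "0 < d2" "\<forall>g'\<in>G. \<forall>y\<in>X. dG g0 g' < d2 \<longrightarrow> dX x0 y < d2 \<longrightarrow> dX (act g0 x0) (act g' y) < d1"
    using act_cont'[OF g0(1) x0 d1(1)] by blast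
  have "\<forall>r>0. \<exists>g'\<in>EE x0 b' d2. dG g0 g' < r" using g0C[OF d2(1)] unfolding CC_def by blast
  then obtain g' where g': "g' \<in> EE x0 b' d2" "dG g0 g' < d2" using d2(1) by blast
  then obtain y where y: "g' \<in> G" "y \<in> X" "dX x0 y < d2" "b' \<le> hh (act g' y)" unfolding EE_def by blast
  have "dX (act g0 x0) (act g' y) < d1" using d2(2) y g'(2) by blast
  hence "hh (act g' y) < b'" using d1(2) act_X y(1,2) by blast
  thus False using y(4) by simp
qed

lemma ff_cont: "cont_to_M X dX ff"
  unfolding cont_to_M_def
proof (intro ballI allI impI)
  fix x a b assume x: "x \<in> X" and ab: "a < ff x \<and> ff x < b"
  obtain d1 where d1: "0 < d1" "\<forall>y\<in>X. dX x y < d1 \<longrightarrow> a < ff y" using ff_lower[OF x] ab by blast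
  obtain d2 where d2: "0 < d2" "\<forall>y\<in>X. dX x y < d2 \<longrightarrow> ff y < b" using ff_upper[OF x] ab by blast
  have "\<forall>y\<in>X. dX x y < min d1 d2 \<longrightarrow> a < ff y \<and> ff y < b" using d1 d2 by simp
  moreover have "0 < min d1 d2" using d1 d2 by simp
  ultimately show "\<exists>\<delta>>0. \<forall>y\<in>X. dX x y < \<delta> \<longrightarrow> a < ff y \<and> ff y < b" by blast
qed

lemma main: "\<exists>f :: 'm list \<Rightarrow> 'm.
           def_function_to_M D n X f \<and> cont_to_M X dX f \<and>
           (\<forall>g\<in>G. \<forall>x\<in>X. f (act g x) = f x) \<and>
           {x\<in>X. f x = 0} = A"
proof (intro exI[of _ ff] conjI)
  show "def_function_to_M D n X ff" by (rule ff_graph)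
  show "cont_to_M X dX ff" by (rule ff_cont)
  show "\<forall>g\<in>G. \<forall>x\<in>X. ff (act g x) = ff x" using ff_inv by blast
  show "{x \<in> X. ff x = 0} = A" using ff_zero AX by blast
qed

end

theorem corollary5p11:
  fixes D :: "nat \<Rightarrow> ('m::{linorder,group_add}) list set set"
    and m n :: nat
    and G :: "'m list set" and dG :: "'m list \<Rightarrow> 'm list \<Rightarrow> 'm"
    and mul :: "'m list \<Rightarrow> 'm list \<Rightarrow> 'm list" and ginv :: "'m list \<Rightarrow> 'm list" and e :: "'m list"
    and X :: "'m list set" and dX :: "'m list \<Rightarrow> 'm list \<Rightarrow> 'm"
    and act :: "'m list \<Rightarrow> 'm list \<Rightarrow> 'm list"
    and A :: "'m list set"
  assumes ordered_group: "\<forall>x y z::'m. x < y \<longrightarrow> z + x < z + y \<and> x + z < y + z"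
    and dense: "\<forall>x y::'m. x < y \<longrightarrow> (\<exists>z. x < z \<and> z < y)"
    and no_endpoints: "\<forall>x::'m. \<exists>y z. y < x \<and> x < z"
    and D_structure: "is_structure D"
    and expansion: "expands_ordered_group D"
    and loc_omin: "locally_o_minimal D"
    and def_complete: "definably_complete D"
    and G_group: "def_metric_group D m G dG mul ginv e"
    and G_compact: "definably_compact D m G dG"
    and X_space: "def_metric_space D n X dX"
    and action: "def_action D m G dG mul e n X dX act"
    and A_def: "A \<in> D n"
    and A_closed: "closed_in_metric X dX A"
    and A_inv: "\<forall>g\<in>G. \<forall>x\<in>A. act g x \<in> A"
  shows "\<exists>f :: 'm list \<Rightarrow> 'm.
           def_function_to_M D n X f \<and> cont_to_M X dX f \<and>
           (\<forall>g\<in>G. \<forall>x\<in>X. f (act g x) = f x) \<and>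
           {x\<in>X. f x = 0} = A"
proof -
  interpret setting D m n G dG mul ginv e X dX act A
    using ordered_group dense no_endpoints D_structure expansion def_complete G_group G_compact
      X_space action A_def A_closed A_inv by unfold_locales
  show ?thesis by (rule main)
qed

end
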